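(* Let $m\ge 2$ be an integer and let $n$ be a positive integer with $m^j\le n<m^{j+1}$ for some integer $j\ge 0$, with base $m$ representation $n=\alpha_j m^j+\cdots+\alpha_1 m+\alpha_0$ ($\alpha_j>0$, $0\le\alpha_i\le m-1$). For $i\ge 1$ let $\chi_i=0$ if $\alpha_{i-1}>0$ and $\chi_i=1$ if $\alpha_{i-1}=0$. Then the number $c_m(n)$ of $m$-ary partitions of $n$ without gaps satisfies \[ c_m(n)=1+\sum_{r=1}^{j}\ \sum_{k_r=\chi_r}^{\lfloor n/m^r\rfloor-1}\ \sum_{k_{r-1}=\chi_{r-1}}^{\alpha_{r-1}-1+mk_r}\cdots\sum_{k_1=\chi_1}^{\alpha_1-1+mk_2}1, \] that is, $c_m(n)=1+\sum_{r=1}^j N_r$, where $N_r$ is the number of integer tuples $(k_r,\ldots,k_1)$ with $\chi_r\le k_r\le \lfloor n/m^r\rfloor-1$ and $\chi_i\le k_i\le \alpha_i-1+mk_{i+1}$ for $1\le i\le r-1$.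
   Context: An $m$-ary partition of a positive integer $n$ is a partition of $n$ in which every part is a power of $m$. It is without gaps if, whenever $m^i$ is its largest part, every $m^k$ with $0\le k<i$ also appears as a part. $c_m(n)$ denotes the number of $m$-ary partitions of $n$ without gaps. $\lfloor a\rfloor$ is the floor of $a$. *)

theory Defs
  imports Complex_Main "HOL-Library.Multiset"
begin

definition mary_partition :: "nat \<Rightarrow> nat \<Rightarrow> nat multiset \<Rightarrow> bool" where
  "mary_partition m n P \<longleftrightarrow> (\<forall>x\<in>#P. \<exists>i. x = m ^ i) \<and> sum_mset P = n"

definition without_gaps :: "nat \<Rightarrow> nat multiset \<Rightarrow> bool" where
  "without_gaps m P \<longleftrightarrow>
     (\<forall>i. m ^ i = Max (set_mset P) \<longrightarrow> (\<forall>k<i. m ^ k \<in># P))"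

definition c :: "nat \<Rightarrow> nat \<Rightarrow> nat" where
  "c m n = card {P. mary_partition m n P \<and> without_gaps m P}"

definition digit :: "nat \<Rightarrow> nat \<Rightarrow> nat \<Rightarrow> nat" where
  "digit m n i = n div m ^ i mod m"

definition chi :: "nat \<Rightarrow> nat \<Rightarrow> nat \<Rightarrow> int" where
  "chi m n i = (if digit m n (i - 1) > 0 then 0 else 1)"

text \<open>N_r: number of integer tuples (k_r,...,k_1), encoded as functions on {1..r}
  (zero outside), with the stated bounds.\<close>
definition N :: "nat \<Rightarrow> nat \<Rightarrow> nat \<Rightarrow> nat" where
  "N m n r = card {k :: nat \<Rightarrow> int.
      (\<forall>i. i \<notin> {1..r} \<longrightarrow> k i = 0) \<and>
      chi m n r \<le> k r \<and> k r \<le> \<lfloor>real n / real m ^ r\<rfloor> - 1 \<and>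
      (\<forall>i\<in>{1..<r}. chi m n i \<le> k i \<and>
                    k i \<le> int (digit m n i) - 1 + int m * k (i + 1))}"

end

theory Submission
  imports Defs
begin

definition KK :: "nat \<Rightarrow> nat \<Rightarrow> nat \<Rightarrow> (nat \<Rightarrow> int) set" where
 "KK m n r = {k :: nat \<Rightarrow> int.
      (\<forall>i. i \<notin> {1..r} \<longrightarrow> k i = 0) \<and>
      chi m n r \<le> k r \<and> k r \<le> \<lfloor>real n / real m ^ r\<rfloor> - 1 \<and>
      (\<forall>i\<in>{1..<r}. chi m n i \<le> k i \<and>
                    k i \<le> int (digit m n i) - 1 + int m * k (i + 1))}"

definition EE :: "nat \<Rightarrow> nat \<Rightarrow> nat \<Rightarrow> (nat \<Rightarrow> nat) set" where
 "EE m n r = {e. (\<forall>i>r. e i = 0) \<and> (\<forall>i\<le>r. 1 \<le> e i) \<and> (\<Sum>i\<le>r. e i * m ^ i) = n}"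

definition SS :: "nat \<Rightarrow> nat \<Rightarrow> nat \<Rightarrow> (nat \<Rightarrow> int) \<Rightarrow> nat \<Rightarrow> int" where
 "SS m n r k i = (if i \<le> r then int (n div m ^ i) - k i else 0)"

definition psi :: "nat \<Rightarrow> nat \<Rightarrow> nat \<Rightarrow> (nat \<Rightarrow> int) \<Rightarrow> nat \<Rightarrow> nat" where
 "psi m n r k i = (if i \<le> r then nat (SS m n r k i - int m * SS m n r k (Suc i)) else 0)"

definition TT :: "nat \<Rightarrow> nat \<Rightarrow> (nat \<Rightarrow> nat) \<Rightarrow> nat \<Rightarrow> int" where
 "TT m r e i = (\<Sum>l\<in>{i..r}. int (e l) * int m ^ (l - i))"

definition theta :: "nat \<Rightarrow> nat \<Rightarrow> nat \<Rightarrow> (nat \<Rightarrow> nat) \<Rightarrow> nat \<Rightarrow> int" where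
 "theta m n r e i = (if 1 \<le> i \<and> i \<le> r then int (n div m ^ i) - TT m r e i else 0)"

lemma floor_eq: "\<lfloor>real n / real m ^ r\<rfloor> = int (n div m ^ r)"
  by (metis floor_divide_of_nat_eq of_nat_power of_int_of_nat_eq)

lemma fl_rec: "int (n div m ^ i) = int m * int (n div m ^ Suc i) + int (digit m n i)"
proof -
  have "n div m ^ Suc i = n div m ^ i div m" by (simp only: power_Suc2 div_mult2_eq)
  then have "n div m ^ i = m * (n div m ^ Suc i) + digit m n i"
    by (simp add: digit_def)
  then show ?thesis by simp
qed

lemma digit_lt: "m > 0 \<Longrightarrow> digit m n i < m" by (simp add: digit_def)

lemma TT_rec: "i \<le> r \<Longrightarrow> TT m r e i = int (e i) + int m * TT m r e (Suc i)"
proof -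
  assume i: "i \<le> r"
  have "{i..r} = insert i {Suc i..r}" using i by auto
  then have "TT m r e i = int (e i) + (\<Sum>l\<in>{Suc i..r}. int (e l) * int m ^ (l - i))"
    by (simp add: TT_def)
  also have "(\<Sum>l\<in>{Suc i..r}. int (e l) * int m ^ (l - i)) = int m * TT m r e (Suc i)"
    unfolding TT_def sum_distrib_left
  proof (rule sum.cong)
    fix l assume "l \<in> {Suc i..r}"
    then have "l - i = Suc (l - Suc i)" by auto
    then show "int (e l) * int m ^ (l - i) = int m * (int (e l) * int m ^ (l - Suc i))"
      by simp
  qed simp
  finally show ?thesis .
qed

lemma TT_big: "r < i \<Longrightarrow> TT m r e i = 0" by (simp add: TT_def)

lemma TT0: "TT m r e 0 = int (\<Sum>i\<le>r. e i * m ^ i)"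
  by (simp add: TT_def atLeast0AtMost)

lemma SS_pos:
  assumes m: "m \<ge> 2" and r: "r \<ge> 1" and k: "k \<in> KK m n r" and i: "i \<le> r"
  shows "SS m n r k i - int m * SS m n r k (Suc i) \<ge> 1"
proof -
  have supp: "\<And>i. i \<notin> {1..r} \<Longrightarrow> k i = 0"
    and kr: "k r \<le> int (n div m ^ r) - 1"
    and mid: "\<And>i. i \<in> {1..<r} \<Longrightarrow> chi m n i \<le> k i \<and> k i \<le> int (digit m n i) - 1 + int m * k (i + 1)"
    and chir: "chi m n r \<le> k r"
    using k unfolding KK_def floor_eq by auto
  have chi1: "chi m n 1 \<le> k 1"
  proof (cases "r = 1")
    case True then show ?thesis using chir by simp
  next
    case False then show ?thesis using mid[of 1] r by auto
  qed
  show ?thesis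
  proof (cases "i = r")
    case True then show ?thesis using kr by (simp add: SS_def)
  next
    case False
    then have ir: "i < r" using i by simp
    note fl = fl_rec[of n m i]
    show ?thesis
    proof (cases "i = 0")
      case True
      have k0: "k 0 = 0" using supp by simp
      have "int (digit m n 0) + int m * k 1 \<ge> 1"
      proof (cases "digit m n 0 > 0")
        case True
        then have "k 1 \<ge> 0" using chi1 by (simp add: chi_def)
        then have "int m * k 1 \<ge> 0" by simp
        then show ?thesis using True by linarith
      next
        case False
        then have "k 1 \<ge> 1" using chi1 by (simp add: chi_def)
        then have "int m * k 1 \<ge> int m * 1" by (intro mult_left_mono) auto
        moreover have "int m \<ge> 2" using m by simp
        ultimately show ?thesis by linarith
      qed
      then show ?thesis using True ir fl k0 by (simp add: SS_def algebra_simps)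
    next
      case False
      then have "k i \<le> int (digit m n i) - 1 + int m * k (i + 1)" using mid[of i] ir by auto
      then show ?thesis using ir fl by (simp add: SS_def algebra_simps)
    qed
  qed
qed

lemma TT_psi:
  assumes m: "m \<ge> 2" and r: "r \<ge> 1" and k: "k \<in> KK m n r" and i: "i \<le> Suc r"
  shows "TT m r (psi m n r k) i = SS m n r k i"
  using i
proof (induction i rule: inc_induct)
  case base then show ?case by (simp add: TT_big SS_def)
next
  case (step i)
  then have ir: "i \<le> r" by simp
  have "TT m r (psi m n r k) i = int (psi m n r k i) + int m * SS m n r k (Suc i)"
    using TT_rec[OF ir] step.IH by simp
  also have "int (psi m n r k i) = SS m n r k i - int m * SS m n r k (Suc i)"
    using SS_pos[OF m r k ir] ir by (simp add: psi_def)
  finally show ?case by simp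
qed

lemma psi_in:
  assumes m: "m \<ge> 2" and r: "r \<ge> 1" and k: "k \<in> KK m n r"
  shows "psi m n r k \<in> EE m n r \<and> theta m n r (psi m n r k) = k"
proof -
  have supp: "\<And>i. i \<notin> {1..r} \<Longrightarrow> k i = 0" using k unfolding KK_def by auto
  have "int (\<Sum>i\<le>r. psi m n r k i * m ^ i) = TT m r (psi m n r k) 0" by (simp add: TT0)
  also have "\<dots> = SS m n r k 0" using TT_psi[OF m r k] by simp
  also have "\<dots> = int n" using supp[of 0] by (simp add: SS_def)
  finally have sum: "(\<Sum>i\<le>r. psi m n r k i * m ^ i) = n" by linarith
  have pos: "\<forall>i\<le>r. 1 \<le> psi m n r k i"
  proof (intro allI impI)
    fix i assume i: "i \<le> r"
    have "nat 1 \<le> nat (SS m n r k i - int m * SS m n r k (Suc i))"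
      using SS_pos[OF m r k i] by (rule nat_mono)
    then show "1 \<le> psi m n r k i" using i by (simp add: psi_def)
  qed
  have "psi m n r k \<in> EE m n r" unfolding EE_def using sum pos by (auto simp: psi_def)
  moreover have "theta m n r (psi m n r k) = k"
  proof
    fix i
    show "theta m n r (psi m n r k) i = k i"
    proof (cases "1 \<le> i \<and> i \<le> r")
      case True
      then show ?thesis using TT_psi[OF m r k, of i] by (simp add: theta_def SS_def)
    next
      case False
      then have "k i = 0" using supp by auto
      then show ?thesis using False by (auto simp: theta_def)
    qed
  qed
  ultimately show ?thesis by simp
qed

lemma SS_theta:
  assumes e: "e \<in> EE m n r"
  shows "SS m n r (theta m n r e) i = TT m r e i"
proof -
  have sum: "(\<Sum>i\<le>r. e i * m ^ i) = n" using e by (simp add: EE_def)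
  show ?thesis
  proof (cases "i \<le> r")
    case True
    show ?thesis
    proof (cases "i = 0")
      case True then show ?thesis using sum by (simp add: SS_def theta_def TT0)
    next
      case False then show ?thesis using \<open>i \<le> r\<close> by (simp add: SS_def theta_def)
    qed
  next
    case False then show ?thesis by (simp add: SS_def TT_big)
  qed
qed

lemma TT_bound:
  assumes m: "m \<ge> 2" and e: "e \<in> EE m n r" and i: "i \<le> r"
  shows "TT m r e i \<le> int (n div m ^ i) \<and>
         (i \<ge> 1 \<and> digit m n (i - 1) = 0 \<longrightarrow> TT m r e i \<le> int (n div m ^ i) - 1)"
  using i
proof (induction i)
  case 0
  have sum: "(\<Sum>i\<le>r. e i * m ^ i) = n" using e by (simp add: EE_def)
  then show ?case by (simp add: TT0)
next
  case (Suc i)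
  then have ir: "i \<le> r" by simp
  have IH: "TT m r e i \<le> int (n div m ^ i)" using Suc by simp
  have ei: "e i \<ge> 1" using e ir by (simp add: EE_def)
  have fl: "int (n div m ^ i) = int m * int (n div m ^ Suc i) + int (digit m n i)" by (rule fl_rec)
  have dl: "digit m n i < m" using m digit_lt by simp
  have mT: "int m * TT m r e (Suc i) \<le> int m * int (n div m ^ Suc i) + int (digit m n i) - 1"
    using TT_rec[OF ir, of m e] IH ei fl by linarith
  have mpos: "int m > 0" using m by simp
  have A: "TT m r e (Suc i) \<le> int (n div m ^ Suc i)"
  proof (rule ccontr)
    assume "\<not> ?thesis"
    then have "TT m r e (Suc i) \<ge> int (n div m ^ Suc i) + 1" by simp
    then have "int m * TT m r e (Suc i) \<ge> int m * (int (n div m ^ Suc i) + 1)"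
      using mpos by (intro mult_left_mono) auto
    then show False using mT dl by (simp add: algebra_simps)
  qed
  have B: "digit m n i = 0 \<longrightarrow> TT m r e (Suc i) \<le> int (n div m ^ Suc i) - 1"
  proof
    assume d0: "digit m n i = 0"
    show "TT m r e (Suc i) \<le> int (n div m ^ Suc i) - 1"
    proof (rule ccontr)
      assume "\<not> ?thesis"
      then have "TT m r e (Suc i) \<ge> int (n div m ^ Suc i)" by simp
      then have "int m * TT m r e (Suc i) \<ge> int m * (int (n div m ^ Suc i))"
        using mpos by (intro mult_left_mono) auto
      then show False using mT d0 by simp
    qed
  qed
  show ?case using A B by simp
qed

lemma theta_in:
  assumes m: "m \<ge> 2" and r: "r \<ge> 1" and e: "e \<in> EE m n r"
  shows "theta m n r e \<in> KK m n r \<and> psi m n r (theta m n r e) = e"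
proof -
  have supp: "\<And>i. i > r \<Longrightarrow> e i = 0" and pos: "\<And>i. i \<le> r \<Longrightarrow> 1 \<le> e i"
    using e by (auto simp: EE_def)
  have ps: "psi m n r (theta m n r e) = e"
  proof
    fix i
    show "psi m n r (theta m n r e) i = e i"
    proof (cases "i \<le> r")
      case True
      then show ?thesis using TT_rec[OF True, of m e] by (simp add: psi_def SS_theta[OF e])
    next
      case False then show ?thesis using supp[of i] by (simp add: psi_def)
    qed
  qed
  let ?k = "theta m n r e"
  have chi_ok: "chi m n i \<le> ?k i" if "1 \<le> i" "i \<le> r" for i
    using TT_bound[OF m e that(2)] that by (auto simp: chi_def theta_def)
  have kr: "?k r \<le> int (n div m ^ r) - 1"
    using TT_rec[of r r m e] TT_big[of r "Suc r" m e] pos[of r] r by (simp add: theta_def)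
  have midb: "?k i \<le> int (digit m n i) - 1 + int m * ?k (i + 1)" if "1 \<le> i" "i < r" for i
  proof -
    have "TT m r e i = int (e i) + int m * TT m r e (Suc i)" using that by (intro TT_rec) simp
    moreover have "e i \<ge> 1" using pos that by simp
    moreover note fl_rec[of n m i]
    ultimately show ?thesis using that by (simp add: theta_def algebra_simps)
  qed
  have "?k \<in> KK m n r"
    unfolding KK_def floor_eq using chi_ok kr midb r by (auto simp: theta_def)
  then show ?thesis using ps by simp
qed

lemma card_KK:
  assumes m: "m \<ge> 2" and r: "r \<ge> 1"
  shows "card (KK m n r) = card (EE m n r)"
proof -
  have "bij_betw (psi m n r) (KK m n r) (EE m n r)"
    by (rule bij_betw_byWitness[where f'="theta m n r"])
       (use psi_in[OF m r] theta_in[OF m r] in auto)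
  then show ?thesis by (rule bij_betw_same_card)
qed

definition rho :: "nat \<Rightarrow> nat \<Rightarrow> (nat \<Rightarrow> nat) \<Rightarrow> nat multiset" where
  "rho m r e = (\<Sum>i\<le>r. replicate_mset (e i) (m ^ i))"

definition QQ :: "nat \<Rightarrow> nat \<Rightarrow> nat \<Rightarrow> nat multiset set" where
  "QQ m n r = {P. mary_partition m n P \<and> without_gaps m P \<and> Max (set_mset P) = m ^ r}"

lemma count_rho_pow:
  assumes m: "m \<ge> 2"
  shows "count (rho m r e) (m ^ i) = (if i \<le> r then e i else 0)"
proof -
  have "count (rho m r e) (m ^ i) = (\<Sum>l\<le>r. if l = i then e l else 0)"
    unfolding rho_def count_sum using m by (intro sum.cong) auto
  then show ?thesis by simp
qed

lemma count_rho_nonpow: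
  assumes "\<forall>i. x \<noteq> m ^ i"
  shows "count (rho m r e) x = 0"
  unfolding rho_def count_sum using assms by auto

lemma sum_mset_sum_gen: "finite A \<Longrightarrow> sum_mset (sum f A) = (\<Sum>a\<in>A. sum_mset (f a))"
  by (induction A rule: finite_induct) auto

lemma sum_mset_rho: "sum_mset (rho m r e) = (\<Sum>i\<le>r. e i * m ^ i)"
  unfolding rho_def by (simp add: sum_mset_sum_gen)

lemma mem_rho:
  assumes m: "m \<ge> 2" and e: "e \<in> EE m n r"
  shows "x \<in># rho m r e \<longleftrightarrow> (\<exists>i\<le>r. x = m ^ i)"
proof
  assume "x \<in># rho m r e"
  then have "count (rho m r e) x \<noteq> 0" by simp
  then have "\<exists>i. x = m ^ i"
  proof (rule contrapos_pp)
    assume "\<not> (\<exists>i. x = m ^ i)"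
    then have "\<forall>i. x \<noteq> m ^ i" by simp
    then show "\<not> count (rho m r e) x \<noteq> 0" using count_rho_nonpow[of x m r e] by simp
  qed
  then obtain i where i: "x = m ^ i" by blast
  then have "i \<le> r" using count_rho_pow[OF m, of r e i] \<open>count (rho m r e) x \<noteq> 0\<close>
    by (auto split: if_splits)
  then show "\<exists>i\<le>r. x = m ^ i" using i by blast
next
  assume "\<exists>i\<le>r. x = m ^ i"
  then obtain i where "i \<le> r" "x = m ^ i" by blast
  moreover have "e i \<ge> 1" using e \<open>i \<le> r\<close> by (simp add: EE_def)
  ultimately have "count (rho m r e) x > 0" using count_rho_pow[OF m, of r e i] by simp
  then show "x \<in># rho m r e" by simp
qed

lemma set_rho:
  assumes m: "m \<ge> 2" and e: "e \<in> EE m n r"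
  shows "set_mset (rho m r e) = (\<lambda>i. m ^ i) ` {..r}"
  using mem_rho[OF m e] by auto

lemma Max_rho:
  assumes m: "m \<ge> 2" and e: "e \<in> EE m n r"
  shows "Max (set_mset (rho m r e)) = m ^ r"
  unfolding set_rho[OF m e]
  by (rule Max_eqI) (use m in \<open>auto intro: power_increasing\<close>)

lemma rho_in:
  assumes m: "m \<ge> 2" and e: "e \<in> EE m n r"
  shows "rho m r e \<in> QQ m n r"
proof -
  have mp: "mary_partition m n (rho m r e)"
    unfolding mary_partition_def using mem_rho[OF m e] sum_mset_rho[of m r e] e
    by (auto simp: EE_def)
  have wg: "without_gaps m (rho m r e)"
    unfolding without_gaps_def Max_rho[OF m e] using m mem_rho[OF m e] by auto
  show ?thesis unfolding QQ_def using mp wg Max_rho[OF m e] by simp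
qed

definition cvec :: "nat \<Rightarrow> nat \<Rightarrow> nat multiset \<Rightarrow> nat \<Rightarrow> nat" where
  "cvec m r P = (\<lambda>i. if i \<le> r then count P (m ^ i) else 0)"

lemma QQ_sub:
  assumes m: "m \<ge> 2" and n: "n > 0" and P: "P \<in> QQ m n r"
  shows "cvec m r P \<in> EE m n r \<and> rho m r (cvec m r P) = P"
proof -
  have pw: "\<And>x. x \<in># P \<Longrightarrow> \<exists>i. x = m ^ i" and sP: "sum_mset P = n"
    and wg: "without_gaps m P" and mx: "Max (set_mset P) = m ^ r"
    using P by (auto simp: QQ_def mary_partition_def)
  have ne: "set_mset P \<noteq> {}" using sP n by auto
  have mr: "m ^ r \<in># P" using Max_in[OF finite_set_mset ne] mx by simp
  have le: "i \<le> r" if "m ^ i \<in># P" for i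
  proof -
    have "m ^ i \<le> m ^ r" using Max_ge[OF finite_set_mset that] mx by simp
    then show ?thesis using m power_le_imp_le_exp[of m i r] by simp
  qed
  have eq: "rho m r (cvec m r P) = P"
  proof (rule multiset_eqI)
    fix x
    show "count (rho m r (cvec m r P)) x = count P x"
    proof (cases "\<exists>i. x = m ^ i")
      case True
      then obtain i where i: "x = m ^ i" by blast
      show ?thesis
      proof (cases "i \<le> r")
        case True then show ?thesis using i count_rho_pow[OF m] by (simp add: cvec_def)
      next
        case False
        then have "x \<notin># P" using le i by blast
        then show ?thesis using i False count_rho_pow[OF m] by (simp add: cvec_def not_in_iff)
      qed
    next
      case False
      then have "x \<notin># P" using pw by blast
      then show ?thesis using False count_rho_nonpow[of x m] by (simp add: not_in_iff)
    qed
  qed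
  have pos: "1 \<le> cvec m r P i" if "i \<le> r" for i
  proof (cases "i = r")
    case True then show ?thesis using mr by (simp add: cvec_def Suc_le_eq)
  next
    case False
    then have "m ^ i \<in># P" using wg mx that unfolding without_gaps_def by auto
    then show ?thesis using that by (simp add: cvec_def Suc_le_eq)
  qed
  have "(\<Sum>i\<le>r. cvec m r P i * m ^ i) = n"
    using sum_mset_rho[of m r "cvec m r P"] eq sP by simp
  then have "cvec m r P \<in> EE m n r" using pos by (auto simp: EE_def cvec_def)
  then show ?thesis using eq by simp
qed

lemma QQ_eq:
  assumes m: "m \<ge> 2" and n: "n > 0"
  shows "QQ m n r = rho m r ` EE m n r"
proof
  show "QQ m n r \<subseteq> rho m r ` EE m n r"
  proof
    fix P assume "P \<in> QQ m n r"
    then show "P \<in> rho m r ` EE m n r" using QQ_sub[OF m n] by (metis image_eqI)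
  qed
  show "rho m r ` EE m n r \<subseteq> QQ m n r" using rho_in[OF m] by auto
qed

lemma inj_rho:
  assumes m: "m \<ge> 2"
  shows "inj_on (rho m r) (EE m n r)"
proof
  fix e e' assume e: "e \<in> EE m n r" and e': "e' \<in> EE m n r" and h: "rho m r e = rho m r e'"
  show "e = e'"
  proof
    fix i
    show "e i = e' i"
    proof (cases "i \<le> r")
      case True
      then show ?thesis using count_rho_pow[OF m, of r e i] count_rho_pow[OF m, of r e' i] h by simp
    next
      case False then show ?thesis using e e' by (simp add: EE_def)
    qed
  qed
qed

lemma card_QQ:
  assumes m: "m \<ge> 2" and n: "n > 0"
  shows "card (QQ m n r) = card (EE m n r)"
  using QQ_eq[OF m n] inj_rho[OF m] by (simp add: card_image)

lemma EE0:
  assumes n: "n > 0"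
  shows "EE m n 0 = {\<lambda>i. if i = 0 then n else 0}"
proof -
  have "e = (\<lambda>i. if i = 0 then n else 0)" if "e \<in> EE m n 0" for e
    using that by (auto simp: EE_def)
  moreover have "(\<lambda>i. if i = 0 then n else 0) \<in> EE m n 0" using n by (simp add: EE_def)
  ultimately show ?thesis by blast
qed

lemma mem_le_sum: "x \<in># P \<Longrightarrow> x \<le> sum_mset (P :: nat multiset)"
  using multi_member_split[of x P] by auto

lemma size_le_sum: "(\<forall>x\<in>#P. 1 \<le> x) \<Longrightarrow> size P \<le> sum_mset (P :: nat multiset)"
  by (induction P) auto

theorem theorem1p3:
  fixes m n j :: nat
  assumes "m \<ge> 2" and "n > 0" and "m ^ j \<le> n" and "n < m ^ (j + 1)"
  shows "c m n = 1 + (\<Sum>r = 1..j. N m n r)"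
proof -
  note m = assms(1) and n = assms(2)
  define V where "V = {P. mary_partition m n P \<and> without_gaps m P}"
  have V_eq: "V = (\<Union>r\<in>{0..j}. QQ m n r)"
  proof
    show "(\<Union>r\<in>{0..j}. QQ m n r) \<subseteq> V" by (auto simp: V_def QQ_def)
    show "V \<subseteq> (\<Union>r\<in>{0..j}. QQ m n r)"
    proof
      fix P assume P: "P \<in> V"
      then have pw: "\<And>x. x \<in># P \<Longrightarrow> \<exists>i. x = m ^ i" and sP: "sum_mset P = n"
        by (auto simp: V_def mary_partition_def)
      have ne: "set_mset P \<noteq> {}" using sP n by auto
      have "Max (set_mset P) \<in># P" using Max_in[OF finite_set_mset ne] by simp
      then obtain r where r: "Max (set_mset P) = m ^ r" using pw by blast
      have "m ^ r \<le> n" using mem_le_sum[OF \<open>Max (set_mset P) \<in># P\<close>] r sP by simp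
      then have "m ^ r < m ^ (j + 1)" using assms(4) by simp
      then have "r \<le> j" using power_less_imp_less_exp[of m r "j+1"] m by simp
      then show "P \<in> (\<Union>r\<in>{0..j}. QQ m n r)" using P r by (auto simp: V_def QQ_def)
    qed
  qed
  have finV: "finite V"
  proof (rule finite_subset)
    show "V \<subseteq> (\<Union>s\<in>{..n}. multisets_of_size {..n} s)"
    proof
      fix P assume P: "P \<in> V"
      then have pw: "\<And>x. x \<in># P \<Longrightarrow> \<exists>i. x = m ^ i" and sP: "sum_mset P = n"
        by (auto simp: V_def mary_partition_def)
      have ge1: "\<forall>x\<in>#P. 1 \<le> x"
      proof
        fix x assume "x \<in># P"
        then obtain i where "x = m ^ i" using pw by blast
        then show "1 \<le> x" using m by simp
      qed
      have "size P \<le> n" using size_le_sum[OF ge1] sP by simp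
      moreover have "set_mset P \<subseteq> {..n}" using mem_le_sum sP by auto
      ultimately show "P \<in> (\<Union>s\<in>{..n}. multisets_of_size {..n} s)"
        by (auto simp: multisets_of_size_def)
    qed
    show "finite (\<Union>s\<in>{..n}. multisets_of_size {..n} s)" by auto
  qed
  have "c m n = card V" by (simp add: c_def V_def)
  also have "\<dots> = (\<Sum>r\<in>{0..j}. card (QQ m n r))"
    unfolding V_eq
  proof (rule card_UN_disjoint)
    show "finite {0..j}" by simp
    show "\<forall>r\<in>{0..j}. finite (QQ m n r)"
      using finV V_eq by (metis UN_upper finite_subset)
    show "\<forall>r\<in>{0..j}. \<forall>s\<in>{0..j}. r \<noteq> s \<longrightarrow> QQ m n r \<inter> QQ m n s = {}"
      using m by (auto simp: QQ_def)
  qed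
  also have "\<dots> = card (QQ m n 0) + (\<Sum>r = 1..j. card (QQ m n r))"
    by (simp add: sum.atLeast_Suc_atMost)
  also have "card (QQ m n 0) = 1" using card_QQ[OF m n, of 0] EE0[OF n] by simp
  also have "(\<Sum>r = 1..j. card (QQ m n r)) = (\<Sum>r = 1..j. N m n r)"
  proof (rule sum.cong)
    fix r assume "r \<in> {1..j}"
    then have r: "r \<ge> 1" by simp
    have "N m n r = card (KK m n r)" by (simp add: N_def KK_def)
    then show "card (QQ m n r) = N m n r" using card_QQ[OF m n] card_KK[OF m r] by simp
  qed simp
  finally show ?thesis .
qed

end
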